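(* Let $k\ge1$ and $R\neq0$. Consider an indecomposable linear differential system $$y'=\Big(\frac{A_0+A_1x+\dots+A_kx^k}{x^{k+1}}+\frac{\widehat A_R}{x-R}\Big)y=\frac{B(x)}{x^{k+1}(x-R)}y,\qquad y\in\mathbb{C}^n,$$ where $A_0$ is diagonal with distinct eigenvalues. Then there exist $n-1$ distinct pairs $(i_\ell,j_\ell)$ with $i_\ell\neq j_\ell$, $\ell=1,\dots,n-1$, and exponents $m_{i_\ell,j_\ell}\in\{1,\dots,k+1\}$, with the following property. The equation is conjugate, by means of an invertible diagonal transformation, to a unique system in which the coefficient of the monomial $x^{m_{i_\ell,j_\ell}}$ of the entry $(B)_{i_\ell,j_\ell}$ equals $1$ for each $\ell$. The only automorphisms of this normalized unique system are the scalar matrices $cI_n$, $c\in\mathbb{C}^*$.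
   Context: The system is indecomposable if it cannot be gauge transformed to a block diagonal form. An automorphism of the system is an invertible gauge transformation $y=gz$ transforming the system into itself. *)

theory Defs
  imports "HOL-Analysis.Analysis"
begin

text \<open>System y' = B(x)/(x^(k+1)(x-R)) y with
  B(x) = (A_0 + ... + A_k x^k)(x - R) + Ahat x^(k+1).
  Bcoef k R A Ahat m is the coefficient matrix of x^m in B(x), for m = 0..k+1.\<close>
definition Bcoef :: "nat \<Rightarrow> complex \<Rightarrow> (nat \<Rightarrow> complex^'n^'n) \<Rightarrow> complex^'n^'n \<Rightarrow> nat \<Rightarrow> complex^'n^'n" where
  "Bcoef k R A Ahat m = (\<chi> i j.
      (if 1 \<le> m \<and> m \<le> k + 1 then A (m - 1) $ i $ j else 0)
    - (if m \<le> k then R * (A m $ i $ j) else 0)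
    + (if m = k + 1 then Ahat $ i $ j else 0))"

text \<open>Constant gauge transformation y = g z acting on a coefficient matrix.\<close>
definition gauge :: "complex^'n^'n \<Rightarrow> complex^'n^'n \<Rightarrow> complex^'n^'n" where
  "gauge g M = matrix_inv g ** M ** g"

definition isdiag :: "complex^'n^'n \<Rightarrow> bool" where
  "isdiag D \<longleftrightarrow> (\<forall>i j. i \<noteq> j \<longrightarrow> D $ i $ j = 0)"

definition indecomposable :: "nat \<Rightarrow> complex \<Rightarrow> (nat \<Rightarrow> complex^'n^'n) \<Rightarrow> complex^'n^'n \<Rightarrow> bool" where
  "indecomposable k R A Ahat \<longleftrightarrow>
     \<not> (\<exists>g S. invertible g \<and> S \<noteq> {} \<and> S \<noteq> UNIV \<and>
          (\<forall>m \<le> k + 1. \<forall>i j. (i \<in> S) \<noteq> (j \<in> S) \<longrightarrow>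
               gauge g (Bcoef k R A Ahat m) $ i $ j = 0))"

definition normalizing :: "nat \<Rightarrow> complex \<Rightarrow> (nat \<Rightarrow> complex^'n^'n) \<Rightarrow> complex^'n^'n
    \<Rightarrow> (nat \<Rightarrow> 'n \<times> 'n) \<Rightarrow> ('n \<times> 'n \<Rightarrow> nat) \<Rightarrow> complex^'n^'n \<Rightarrow> bool" where
  "normalizing k R A Ahat p mexp D \<longleftrightarrow> isdiag D \<and> invertible D \<and>
     (\<forall>l < CARD('n) - 1.
        gauge D (Bcoef k R A Ahat (mexp (p l))) $ fst (p l) $ snd (p l) = 1)"

end

theory Submission
  imports Defs
begin

lemma minv: fixes A :: "complex^'n^'n" assumes "invertible A"
  shows "A ** matrix_inv A = mat 1 \<and> matrix_inv A ** A = mat 1"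
  using assms unfolding invertible_def matrix_inv_def by (rule someI_ex)

lemma minv_unique: fixes A B :: "complex^'n^'n"
  assumes "A ** B = mat 1" "B ** A = mat 1" shows "matrix_inv A = B"
proof -
  have inv: "invertible A" using assms invertible_def by blast
  have "matrix_inv A = matrix_inv A ** (A ** B)" using assms by simp
  also have "\<dots> = (matrix_inv A ** A) ** B" by (simp add: matrix_mul_assoc)
  also have "\<dots> = B" using minv[OF inv] by simp
  finally show ?thesis .
qed

definition diagm :: "('n \<Rightarrow> complex) \<Rightarrow> complex^'n^'n" where
  "diagm d = (\<chi> i j. if i = j then d i else 0)"

lemma mul_diag_right: "(M ** diagm d) $ i $ j = M $ i $ j * d j"
proof -
  have "(M ** diagm d) $ i $ j = (\<Sum>l\<in>UNIV. M $ i $ l * (if l = j then d l else 0))"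
    by (simp add: matrix_matrix_mult_def diagm_def)
  also have "\<dots> = (\<Sum>l\<in>UNIV. if l = j then M $ i $ l * d l else 0)"
    by (rule sum.cong) auto
  also have "\<dots> = M $ i $ j * d j" by simp
  finally show ?thesis .
qed

lemma mul_diag_left: "(diagm d ** M) $ i $ j = d i * M $ i $ j"
proof -
  have "(diagm d ** M) $ i $ j = (\<Sum>l\<in>UNIV. (if i = l then d i else 0) * M $ l $ j)"
    by (simp add: matrix_matrix_mult_def diagm_def)
  also have "\<dots> = (\<Sum>l\<in>UNIV. if l = i then d i * M $ i $ j else 0)"
    by (rule sum.cong) auto
  also have "\<dots> = d i * M $ i $ j" by simp
  finally show ?thesis .
qed

lemma diag_mul_diag: "diagm a ** diagm b = diagm (\<lambda>i. a i * b i)"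
  by (simp add: vec_eq_iff mul_diag_right) (simp add: diagm_def)

lemma mat1_diag: "mat 1 = diagm (\<lambda>i. 1)"
  by (simp add: vec_eq_iff diagm_def mat_def)

lemma inv_diag: assumes "\<forall>i. d i \<noteq> 0" shows "matrix_inv (diagm d) = diagm (\<lambda>i. 1 / d i)"
  by (rule minv_unique) (simp_all add: diag_mul_diag assms mat1_diag)

lemma gauge_diag: assumes "\<forall>i. d i \<noteq> 0"
  shows "gauge (diagm d) M $ i $ j = M $ i $ j * d j / d i"
  unfolding gauge_def inv_diag[OF assms] by (simp add: mul_diag_right mul_diag_left)

lemma isdiag_eq: "isdiag D \<Longrightarrow> D = diagm (\<lambda>i. D $ i $ i)"
  by (auto simp: isdiag_def vec_eq_iff diagm_def)

lemma diag_inv_nz: assumes "invertible (diagm d)" shows "d i \<noteq> 0"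
proof
  assume z: "d i = 0"
  obtain B where "diagm d ** B = mat 1" using assms invertible_def by blast
  then have "(diagm d ** B) $ i $ i = 1" by (simp add: mat_def)
  then show False using z by (simp add: mul_diag_left)
qed

lemma diag_invertible: "\<forall>i. d i \<noteq> 0 \<Longrightarrow> invertible (diagm d)"
  unfolding invertible_def
  by (rule exI[of _ "diagm (\<lambda>i. 1 / d i)"]) (simp add: diag_mul_diag mat1_diag)

lemma gauge_comm: fixes g X :: "complex^'n^'n" assumes "invertible g"
  shows "gauge g X = X \<longleftrightarrow> X ** g = g ** X"
proof
  assume "gauge g X = X"
  then have "g ** (matrix_inv g ** X ** g) = g ** X" by (simp add: gauge_def)
  then show "X ** g = g ** X" using minv[OF assms] by (simp add: matrix_mul_assoc)
next
  assume c: "X ** g = g ** X"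
  have "gauge g X = matrix_inv g ** (X ** g)" by (simp add: gauge_def matrix_mul_assoc)
  also have "\<dots> = X" using c minv[OF assms] by (simp add: matrix_mul_assoc)
  finally show "gauge g X = X" .
qed

lemma mat_diag: "mat c = diagm (\<lambda>i. c)"
  by (simp add: vec_eq_iff diagm_def mat_def)

definition ed :: "(nat \<Rightarrow> complex^'n^'n) \<Rightarrow> nat \<Rightarrow> 'n \<Rightarrow> 'n \<Rightarrow> bool" where
  "ed B N i j \<longleftrightarrow> i \<noteq> j \<and> (\<exists>m. 1 \<le> m \<and> m \<le> N \<and> B m $ i $ j \<noteq> 0)"

definition mx :: "(nat \<Rightarrow> complex^'n^'n) \<Rightarrow> nat \<Rightarrow> 'n \<times> 'n \<Rightarrow> nat" where
  "mx B N = (\<lambda>(i,j). SOME m. 1 \<le> m \<and> m \<le> N \<and> B m $ i $ j \<noteq> 0)"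

lemma mx_prop: "ed B N i j \<Longrightarrow> 1 \<le> mx B N (i,j) \<and> mx B N (i,j) \<le> N \<and> B (mx B N (i,j)) $ i $ j \<noteq> 0"
proof -
  assume "ed B N i j"
  then have "\<exists>m. 1 \<le> m \<and> m \<le> N \<and> B m $ i $ j \<noteq> 0" by (simp add: ed_def)
  then have "1 \<le> (SOME m. 1 \<le> m \<and> m \<le> N \<and> B m $ i $ j \<noteq> 0) \<and> (SOME m. 1 \<le> m \<and> m \<le> N \<and> B m $ i $ j \<noteq> 0) \<le> N
     \<and> B (SOME m. 1 \<le> m \<and> m \<le> N \<and> B m $ i $ j \<noteq> 0) $ i $ j \<noteq> 0" by (rule someI_ex)
  then show ?thesis by (simp add: mx_def)
qed

lemma tree_aux:
  fixes B :: "nat \<Rightarrow> complex^'n^'n"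
  assumes conn: "\<And>V. V \<noteq> {} \<Longrightarrow> V \<noteq> UNIV \<Longrightarrow> \<exists>i\<in>V. \<exists>j. j \<notin> V \<and> (ed B N i j \<or> ed B N j i)"
  shows "t < CARD('n) \<Longrightarrow> \<exists>V ps. card V = Suc t \<and> distinct ps \<and> length ps = t \<and>
     (\<forall>i j. (i,j) \<in> set ps \<longrightarrow> ed B N i j \<and> i \<in> V \<and> j \<in> V) \<and>
     (\<exists>d. (\<forall>i. d i \<noteq> 0) \<and> (\<forall>i j. (i,j) \<in> set ps \<longrightarrow> B (mx B N (i,j)) $ i $ j * d j / d i = 1)) \<and>
     (\<forall>e::'n\<Rightarrow>complex. (\<forall>i j. (i,j) \<in> set ps \<longrightarrow> e i = e j) \<longrightarrow> (\<forall>i\<in>V. \<forall>j\<in>V. e i = e j))"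
proof (induction t)
  case 0
  show ?case
  proof (rule exI[of _ "{undefined}"], rule exI[of _ "[]"], intro conjI)
    show "card {undefined::'n} = Suc 0" by simp
    show "distinct []" by simp
    show "length [] = 0" by simp
    show "\<forall>i j. (i,j) \<in> set [] \<longrightarrow> ed B N i j \<and> i \<in> {undefined} \<and> j \<in> {undefined}" by simp
    show "\<exists>d::'n\<Rightarrow>complex. (\<forall>i. d i \<noteq> 0) \<and> (\<forall>i j. (i,j) \<in> set [] \<longrightarrow> B (mx B N (i,j)) $ i $ j * d j / d i = 1)"
      by (rule exI[of _ "\<lambda>_. 1"]) simp
    show "\<forall>e::'n\<Rightarrow>complex. (\<forall>i j. (i,j) \<in> set [] \<longrightarrow> e i = e j) \<longrightarrow> (\<forall>i\<in>{undefined}. \<forall>j\<in>{undefined}. e i = e j)"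
      by simp
  qed
next
  case (Suc t)
  have "t < CARD('n)" using Suc.prems by simp
  from Suc.IH[OF this] obtain V ps d where cV: "card V = Suc t" and dps: "distinct ps" and lps: "length ps = t"
    and eds: "\<forall>i j. (i,j) \<in> set ps \<longrightarrow> ed B N i j \<and> i \<in> V \<and> j \<in> V"
    and dnz: "\<forall>i. d i \<noteq> 0" and deq: "\<forall>i j. (i,j) \<in> set ps \<longrightarrow> B (mx B N (i,j)) $ i $ j * d j / d i = 1"
    and con: "\<forall>e::'n\<Rightarrow>complex. (\<forall>i j. (i,j) \<in> set ps \<longrightarrow> e i = e j) \<longrightarrow> (\<forall>i\<in>V. \<forall>j\<in>V. e i = e j)"
    by (elim exE conjE) (rule that; assumption)
  have fV: "finite V" by simp
  have "V \<noteq> {}" using cV by auto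
  moreover have "V \<noteq> UNIV" 
  proof
    assume "V = UNIV" then have "card V = CARD('n)" by simp
    with cV Suc.prems show False by simp
  qed
  ultimately obtain i j where iV: "i \<in> V" and jV: "j \<notin> V" and e: "ed B N i j \<or> ed B N j i"
    using conn by blast
  have cV': "card (insert j V) = Suc (Suc t)" using cV jV fV by simp
  have nj: "\<forall>a b. (a,b) \<in> set ps \<longrightarrow> a \<noteq> j \<and> b \<noteq> j" using eds jV by auto
  from e show ?case
  proof
    assume ij: "ed B N i j"
    define M where "M = B (mx B N (i,j)) $ i $ j"
    have Mnz: "M \<noteq> 0" using mx_prop[OF ij] M_def by simp
    define d' where "d' = d(j := d i / M)"
    show ?case
    proof (intro exI conjI)
      show "card (insert j V) = Suc (Suc t)" by (rule cV')
      show "distinct (ps @ [(i,j)])" using dps nj by auto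
      show "length (ps @ [(i,j)]) = Suc t" using lps by simp
      show "\<forall>a b. (a,b) \<in> set (ps @ [(i,j)]) \<longrightarrow> ed B N a b \<and> a \<in> insert j V \<and> b \<in> insert j V"
        using eds ij iV by auto
      show "\<forall>a. d' a \<noteq> 0" using dnz Mnz by (simp add: d'_def)
      show "\<forall>a b. (a,b) \<in> set (ps @ [(i,j)]) \<longrightarrow> B (mx B N (a,b)) $ a $ b * d' b / d' a = 1"
      proof (intro allI impI)
        fix a b assume ab: "(a,b) \<in> set (ps @ [(i,j)])"
        show "B (mx B N (a,b)) $ a $ b * d' b / d' a = 1"
        proof (cases "(a,b) \<in> set ps")
          case True
          moreover have "a \<noteq> j" "b \<noteq> j" using nj True by blast+
          ultimately show ?thesis using deq unfolding d'_def by simp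
        next
          case False
          then have "a = i" "b = j" using ab by auto
          moreover have "B (mx B N (i,j)) $ i $ j * d' j / d' i = 1"
          using iV jV Mnz dnz unfolding d'_def M_def[symmetric]
          by (auto simp: field_simps)
          ultimately show ?thesis by simp
        qed
      qed
      show "\<forall>e::'n\<Rightarrow>complex. (\<forall>a b. (a,b) \<in> set (ps @ [(i,j)]) \<longrightarrow> e a = e b) \<longrightarrow> (\<forall>a\<in>insert j V. \<forall>b\<in>insert j V. e a = e b)"
      proof (intro allI impI ballI)
        fix e :: "'n \<Rightarrow> complex" and a b
        assume h: "\<forall>a b. (a,b) \<in> set (ps @ [(i,j)]) \<longrightarrow> e a = e b"
          and a: "a \<in> insert j V" and b: "b \<in> insert j V"
        have "\<forall>a b. (a,b) \<in> set ps \<longrightarrow> e a = e b"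
        proof (intro allI impI)
          fix a b assume "(a,b) \<in> set ps"
          then show "e a = e b" by (intro h[rule_format]) simp
        qed
        then have hv: "\<forall>a\<in>V. \<forall>b\<in>V. e a = e b" by (rule mp[OF spec[OF con, of e]])
        have ej0: "e i = e j" by (intro h[rule_format]) simp
        have ej: "e j = e i" using ej0 by (rule HOL.sym | assumption)
        have ea: "e x = e i" if "x \<in> insert j V" for x
        proof (cases "x = j")
          case True then show ?thesis using ej by simp
        next
          case False then have "x \<in> V" using that by simp
          then show ?thesis using hv iV by blast
        qed
        have "e a = e i" using ea a .
        moreover have "e b = e i" using ea b .
        ultimately show "e a = e b" by simp
      qed
    qed
  next
    assume ji: "ed B N j i"
    define M where "M = B (mx B N (j,i)) $ j $ i"
    have Mnz: "M \<noteq> 0" using mx_prop[OF ji] M_def by simp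
    define d' where "d' = d(j := M * d i)"
    show ?case
    proof (intro exI conjI)
      show "card (insert j V) = Suc (Suc t)" by (rule cV')
      show "distinct (ps @ [(j,i)])" using dps nj by auto
      show "length (ps @ [(j,i)]) = Suc t" using lps by simp
      show "\<forall>a b. (a,b) \<in> set (ps @ [(j,i)]) \<longrightarrow> ed B N a b \<and> a \<in> insert j V \<and> b \<in> insert j V"
        using eds ji iV by auto
      show "\<forall>a. d' a \<noteq> 0" using dnz Mnz by (simp add: d'_def)
      show "\<forall>a b. (a,b) \<in> set (ps @ [(j,i)]) \<longrightarrow> B (mx B N (a,b)) $ a $ b * d' b / d' a = 1"
      proof (intro allI impI)
        fix a b assume ab: "(a,b) \<in> set (ps @ [(j,i)])"
        show "B (mx B N (a,b)) $ a $ b * d' b / d' a = 1"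
        proof (cases "(a,b) \<in> set ps")
          case True
          moreover have "a \<noteq> j" "b \<noteq> j" using nj True by blast+
          ultimately show ?thesis using deq unfolding d'_def by simp
        next
          case False
          then have "a = j" "b = i" using ab by auto
          moreover have "B (mx B N (j,i)) $ j $ i * d' i / d' j = 1"
          using iV jV Mnz dnz unfolding d'_def M_def[symmetric]
          by (auto simp: field_simps)
          ultimately show ?thesis by simp
        qed
      qed
      show "\<forall>e::'n\<Rightarrow>complex. (\<forall>a b. (a,b) \<in> set (ps @ [(j,i)]) \<longrightarrow> e a = e b) \<longrightarrow> (\<forall>a\<in>insert j V. \<forall>b\<in>insert j V. e a = e b)"
      proof (intro allI impI ballI)
        fix e :: "'n \<Rightarrow> complex" and a b
        assume h: "\<forall>a b. (a,b) \<in> set (ps @ [(j,i)]) \<longrightarrow> e a = e b"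
          and a: "a \<in> insert j V" and b: "b \<in> insert j V"
        have "\<forall>a b. (a,b) \<in> set ps \<longrightarrow> e a = e b"
        proof (intro allI impI)
          fix a b assume "(a,b) \<in> set ps"
          then show "e a = e b" by (intro h[rule_format]) simp
        qed
        then have hv: "\<forall>a\<in>V. \<forall>b\<in>V. e a = e b" by (rule mp[OF spec[OF con, of e]])
        have ej0: "e j = e i" by (intro h[rule_format]) simp
        have ej: "e j = e i" using ej0 by (rule HOL.sym | assumption)
        have ea: "e x = e i" if "x \<in> insert j V" for x
        proof (cases "x = j")
          case True then show ?thesis using ej by simp
        next
          case False then have "x \<in> V" using that by simp
          then show ?thesis using hv iV by blast
        qed
        have "e a = e i" using ea a .
        moreover have "e b = e i" using ea b .
        ultimately show "e a = e b" by simp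
      qed
    qed
  qed
qed

lemma tree:
  fixes B :: "nat \<Rightarrow> complex^'n^'n"
  assumes conn: "\<And>V. V \<noteq> {} \<Longrightarrow> V \<noteq> UNIV \<Longrightarrow> \<exists>i\<in>V. \<exists>j. j \<notin> V \<and> (ed B N i j \<or> ed B N j i)"
  shows "\<exists>ps. distinct ps \<and> length ps = CARD('n) - 1 \<and>
     (\<forall>i j. (i,j) \<in> set ps \<longrightarrow> ed B N i j) \<and>
     (\<exists>d. (\<forall>i. d i \<noteq> 0) \<and> (\<forall>i j. (i,j) \<in> set ps \<longrightarrow> B (mx B N (i,j)) $ i $ j * d j / d i = 1)) \<and>
     (\<forall>e::'n\<Rightarrow>complex. (\<forall>i j. (i,j) \<in> set ps \<longrightarrow> e i = e j) \<longrightarrow> (\<forall>i j. e i = e j))"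
proof -
  have "CARD('n) - 1 < CARD('n)" by simp
  have "\<exists>V ps. card V = Suc (CARD('n) - 1) \<and> distinct ps \<and> length ps = CARD('n) - 1 \<and>
     (\<forall>i j. (i,j) \<in> set ps \<longrightarrow> ed B N i j \<and> i \<in> V \<and> j \<in> V) \<and>
     (\<exists>d. (\<forall>i. d i \<noteq> 0) \<and> (\<forall>i j. (i,j) \<in> set ps \<longrightarrow> B (mx B N (i,j)) $ i $ j * d j / d i = 1)) \<and>
     (\<forall>e::'n\<Rightarrow>complex. (\<forall>i j. (i,j) \<in> set ps \<longrightarrow> e i = e j) \<longrightarrow> (\<forall>i\<in>V. \<forall>j\<in>V. e i = e j))"
  proof (rule tree_aux)
    fix V :: "'n set" assume "V \<noteq> {}" "V \<noteq> UNIV"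
    then show "\<exists>i\<in>V. \<exists>j. j \<notin> V \<and> (ed B N i j \<or> ed B N j i)" by (rule conn)
  qed simp
  then obtain V ps where VP: "card V = Suc (CARD('n) - 1) \<and> distinct ps \<and> length ps = CARD('n) - 1 \<and>
     (\<forall>i j. (i,j) \<in> set ps \<longrightarrow> ed B N i j \<and> i \<in> V \<and> j \<in> V) \<and>
     (\<exists>d. (\<forall>i. d i \<noteq> 0) \<and> (\<forall>i j. (i,j) \<in> set ps \<longrightarrow> B (mx B N (i,j)) $ i $ j * d j / d i = 1)) \<and>
     (\<forall>e::'n\<Rightarrow>complex. (\<forall>i j. (i,j) \<in> set ps \<longrightarrow> e i = e j) \<longrightarrow> (\<forall>i\<in>V. \<forall>j\<in>V. e i = e j))" by (elim exE) (rule that)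
  note cV = conjunct1[OF VP] and r = conjunct2[OF VP]
  have "card V = CARD('n)" using cV by simp
  then have "V = UNIV" by (simp add: card_eq_UNIV_imp_eq_UNIV)
  note r1 = conjunct1[OF r] and r2 = conjunct1[OF conjunct2[OF r]]
    and r3 = conjunct1[OF conjunct2[OF conjunct2[OF r]]]
    and r4 = conjunct1[OF conjunct2[OF conjunct2[OF conjunct2[OF r]]]]
    and r5 = conjunct2[OF conjunct2[OF conjunct2[OF conjunct2[OF r]]]]
  have r3': "\<forall>i j. (i,j) \<in> set ps \<longrightarrow> ed B N i j"
    using r3 by blast
  have r5': "\<forall>e::'n\<Rightarrow>complex. (\<forall>i j. (i,j) \<in> set ps \<longrightarrow> e i = e j) \<longrightarrow> (\<forall>i j. e i = e j)"
  proof (intro allI impI)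
    fix e :: "'n \<Rightarrow> complex" and i j
    assume "\<forall>i j. (i,j) \<in> set ps \<longrightarrow> e i = e j"
    then have "\<forall>i\<in>V. \<forall>j\<in>V. e i = e j" by (rule mp[OF spec[OF r5, of e]])
    then show "e i = e j" using \<open>V = UNIV\<close> by blast
  qed
  show ?thesis by (intro exI[of _ ps] conjI r1 r2 r3' r4 r5')
qed



lemma norm_diag:
  fixes D Ahat :: "complex^'n^'n" and A :: "nat \<Rightarrow> complex^'n^'n" and k :: nat and R :: complex
    and p :: "nat \<Rightarrow> 'n \<times> 'n" and mexp :: "'n \<times> 'n \<Rightarrow> nat"
  assumes "normalizing k R A Ahat p mexp D"
  shows "D = diagm (\<lambda>i. D$i$i) \<and> (\<forall>i. D$i$i \<noteq> 0)"
proof -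
  have dg: "isdiag D" and iv: "invertible D" using assms unfolding normalizing_def by blast+
  have e: "D = diagm (\<lambda>i. D$i$i)" by (rule isdiag_eq[OF dg])
  have "invertible (diagm (\<lambda>i. D$i$i))" by (subst e[symmetric]) (rule iv)
  then have "\<forall>i. D$i$i \<noteq> 0" using diag_inv_nz by blast
  with e show ?thesis by (rule conjI)
qed

lemma norm_eq:
  fixes D Ahat :: "complex^'n^'n" and A :: "nat \<Rightarrow> complex^'n^'n" and k :: nat and R :: complex
    and ps :: "('n \<times> 'n) list" and mexp :: "'n \<times> 'n \<Rightarrow> nat" and a b :: 'n
  assumes N: "normalizing k R A Ahat (\<lambda>l. ps ! l) mexp D" and L: "length ps = CARD('n) - 1"
    and ab: "(a,b) \<in> set ps"
  shows "Bcoef k R A Ahat (mexp (a,b)) $ a $ b * D$b$b / D$a$a = (1::complex)"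
proof -
  obtain l where l: "l < length ps" "ps ! l = (a,b)" using ab by (auto simp: in_set_conv_nth)
  have "\<forall>l < CARD('n) - 1. gauge D (Bcoef k R A Ahat (mexp (ps ! l))) $ fst (ps ! l) $ snd (ps ! l) = 1"
    using N unfolding normalizing_def by blast
  then have "l < CARD('n) - 1 \<longrightarrow> gauge D (Bcoef k R A Ahat (mexp (ps ! l))) $ fst (ps ! l) $ snd (ps ! l) = 1"
    by (rule spec)
  moreover have "l < CARD('n) - 1" using l(1) L by simp
  ultimately have "gauge D (Bcoef k R A Ahat (mexp (ps ! l))) $ fst (ps ! l) $ snd (ps ! l) = 1"
    by (rule mp)
  then have g: "gauge D (Bcoef k R A Ahat (mexp (a,b))) $ a $ b = 1" using l(2) by simp
  define d where "d = (\<lambda>i. D$i$i)"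
  have e: "D = diagm d" and nz: "\<forall>i. d i \<noteq> 0" using norm_diag[OF N] unfolding d_def by blast+
  have "gauge D (Bcoef k R A Ahat (mexp (a,b))) $ a $ b = Bcoef k R A Ahat (mexp (a,b)) $ a $ b * d b / d a"
    unfolding e by (rule gauge_diag[OF nz])
  then have "Bcoef k R A Ahat (mexp (a,b)) $ a $ b * d b / d a = 1" using g by simp
  then show ?thesis by (simp add: d_def)
qed

lemma mul_general_diag_comm:
  fixes X :: "complex^'n^'n"
  shows "X ** mat c = mat c ** X"
  by (simp add: mat_diag vec_eq_iff mul_diag_right mul_diag_left mult.commute)

theorem mainTheorem7:
  fixes k :: nat and R :: complex
    and A :: "nat \<Rightarrow> complex^'n^'n" and Ahat :: "complex^'n^'n"
  assumes "k \<ge> 1" and "R \<noteq> 0"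
    and "isdiag (A 0)" and "inj (\<lambda>i. A 0 $ i $ i)"
    and "indecomposable k R A Ahat"
  shows "\<exists>(p :: nat \<Rightarrow> 'n \<times> 'n) (mexp :: 'n \<times> 'n \<Rightarrow> nat).
     inj_on p {..<CARD('n) - 1} \<and>
     (\<forall>l < CARD('n) - 1. fst (p l) \<noteq> snd (p l) \<and> 1 \<le> mexp (p l) \<and> mexp (p l) \<le> k + 1) \<and>
     (\<exists>D. normalizing k R A Ahat p mexp D) \<and>
     (\<forall>D1 D2. normalizing k R A Ahat p mexp D1 \<and> normalizing k R A Ahat p mexp D2 \<longrightarrow>
        (\<forall>m \<le> k + 1. gauge D1 (Bcoef k R A Ahat m) = gauge D2 (Bcoef k R A Ahat m))) \<and>
     (\<forall>D. normalizing k R A Ahat p mexp D \<longrightarrow>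
        (\<forall>g. invertible g \<longrightarrow>
           ((\<forall>m \<le> k + 1. gauge g (gauge D (Bcoef k R A Ahat m)) = gauge D (Bcoef k R A Ahat m))
            \<longleftrightarrow> (\<exists>c. c \<noteq> 0 \<and> g = mat c))))"
proof -
  let ?B = "Bcoef k R A Ahat" and ?N = "k + 1" and ?n = "CARD('n)"
  have B0: "?B 0 $ i $ j = - R * A 0 $ i $ j" for i j by (simp add: Bcoef_def)
  have off0: "i \<noteq> j \<Longrightarrow> ?B 0 $ i $ j = 0" for i j
    using assms(3) by (simp add: B0 isdiag_def)
  have m1: "matrix_inv (mat 1 :: complex^'n^'n) = mat 1" by (rule minv_unique) simp_all
  have inv1: "invertible (mat 1 :: complex^'n^'n)" by (simp add: mat1_diag diag_invertible)
  have g1: "gauge (mat 1) X = X" for X :: "complex^'n^'n" by (simp add: gauge_def m1)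
  have conn: "\<exists>i\<in>V. \<exists>j. j \<notin> V \<and> (ed ?B ?N i j \<or> ed ?B ?N j i)"
    if V: "V \<noteq> {}" "V \<noteq> UNIV" for V
  proof (rule ccontr)
    assume na: "\<not> ?thesis"
    have "\<forall>m \<le> k + 1. \<forall>i j. (i \<in> V) \<noteq> (j \<in> V) \<longrightarrow> gauge (mat 1) (?B m) $ i $ j = 0"
    proof (intro allI impI)
      fix m i j assume m: "m \<le> k + 1" and ij: "(i \<in> V) \<noteq> (j \<in> V)"
      show "gauge (mat 1) (?B m) $ i $ j = 0"
      proof (rule ccontr)
        assume nz: "gauge (mat 1) (?B m) $ i $ j \<noteq> 0"
        then have nz': "?B m $ i $ j \<noteq> 0" by (simp add: g1)
        have "i \<noteq> j" using ij by auto
        have "m \<noteq> 0"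
        proof
          assume "m = 0" then show False using nz' off0[OF \<open>i \<noteq> j\<close>] by simp
        qed
        then have "ed ?B ?N i j" unfolding ed_def using \<open>i \<noteq> j\<close> m nz' by (intro conjI exI[of _ m]) auto
        then show False using na ij by blast
      qed
    qed
    then have "\<exists>g S. invertible g \<and> S \<noteq> {} \<and> S \<noteq> UNIV \<and>
          (\<forall>m \<le> k + 1. \<forall>i j. (i \<in> S) \<noteq> (j \<in> S) \<longrightarrow>
               gauge g (?B m) $ i $ j = 0)"
      using V inv1 by (intro exI[of _ "mat 1"] exI[of _ V] conjI)
    then show False using assms(5) unfolding indecomposable_def by (rule notE[rotated])
  qed
  have "\<exists>ps. distinct ps \<and> length ps = CARD('n) - 1 \<and>
     (\<forall>i j. (i,j) \<in> set ps \<longrightarrow> ed ?B ?N i j) \<and>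
     (\<exists>d. (\<forall>i. d i \<noteq> 0) \<and> (\<forall>i j. (i,j) \<in> set ps \<longrightarrow> ?B (mx ?B ?N (i,j)) $ i $ j * d j / d i = 1)) \<and>
     (\<forall>e::'n\<Rightarrow>complex. (\<forall>i j. (i,j) \<in> set ps \<longrightarrow> e i = e j) \<longrightarrow> (\<forall>i j. e i = e j))"
  proof (rule tree)
    fix V :: "'n set" assume "V \<noteq> {}" "V \<noteq> UNIV"
    then show "\<exists>i\<in>V. \<exists>j. j \<notin> V \<and> (ed ?B ?N i j \<or> ed ?B ?N j i)" by (rule conn)
  qed
  then obtain ps where P: "distinct ps \<and> length ps = CARD('n) - 1 \<and>
     (\<forall>i j. (i,j) \<in> set ps \<longrightarrow> ed ?B ?N i j) \<and>
     (\<exists>d. (\<forall>i. d i \<noteq> 0) \<and> (\<forall>i j. (i,j) \<in> set ps \<longrightarrow> ?B (mx ?B ?N (i,j)) $ i $ j * d j / d i = 1)) \<and>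
     (\<forall>e::'n\<Rightarrow>complex. (\<forall>i j. (i,j) \<in> set ps \<longrightarrow> e i = e j) \<longrightarrow> (\<forall>i j. e i = e j))"
    by (elim exE) (rule that)
  note dps = conjunct1[OF P] and lps = conjunct1[OF conjunct2[OF P]]
    and eds = conjunct1[OF conjunct2[OF conjunct2[OF P]]]
    and dex = conjunct1[OF conjunct2[OF conjunct2[OF conjunct2[OF P]]]]
    and con = conjunct2[OF conjunct2[OF conjunct2[OF conjunct2[OF P]]]]
  define p where "p = (\<lambda>l. ps ! l)"
  define mexp where "mexp = mx ?B ?N"
  have pin: "l < ?n - 1 \<Longrightarrow> p l \<in> set ps" for l using lps by (simp add: p_def)
  show ?thesis
  proof (intro exI[of _ p] exI[of _ mexp] conjI allI impI)
    show "inj_on p {..<?n - 1}" unfolding p_def using dps lps by (intro inj_on_nth) auto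
  next
    fix l assume l: "l < ?n - 1"
    obtain a b where pl: "p l = (a,b)" by (cases "p l")
    have "ed ?B ?N a b" using eds pin[OF l] pl by auto
    then show "fst (p l) \<noteq> snd (p l)" "1 \<le> mexp (p l)" "mexp (p l) \<le> k + 1"
      using mx_prop[of ?B ?N a b] pl by (auto simp: ed_def mexp_def)
  next
    from dex obtain d where dnz: "\<forall>i. d i \<noteq> 0"
      and deq: "\<forall>i j. (i,j) \<in> set ps \<longrightarrow> ?B (mx ?B ?N (i,j)) $ i $ j * d j / d i = 1" by blast
    show "\<exists>D. normalizing k R A Ahat p mexp D"
    proof (intro exI[of _ "diagm d"])
      have "\<forall>l < ?n - 1. gauge (diagm d) (?B (mexp (p l))) $ fst (p l) $ snd (p l) = 1"
      proof (intro allI impI)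
        fix l assume l: "l < ?n - 1"
        obtain a b where pl: "p l = (a,b)" by (cases "p l")
        show "gauge (diagm d) (?B (mexp (p l))) $ fst (p l) $ snd (p l) = 1"
          using deq pin[OF l] pl by (simp add: gauge_diag[OF dnz] mexp_def)
      qed
      then show "normalizing k R A Ahat p mexp (diagm d)"
        unfolding normalizing_def using diag_invertible[OF dnz]
        by (auto simp: isdiag_def diagm_def)
    qed
  next
    fix D1 D2 m
    assume N12: "normalizing k R A Ahat p mexp D1 \<and> normalizing k R A Ahat p mexp D2"
      and m: "m \<le> k + 1"
    have N1: "normalizing k R A Ahat (\<lambda>l. ps ! l) mexp D1" and N2: "normalizing k R A Ahat (\<lambda>l. ps ! l) mexp D2"
      using N12 p_def by auto
    define d1 where "d1 = (\<lambda>i. D1$i$i)"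
    define d2 where "d2 = (\<lambda>i. D2$i$i)"
    have D1: "D1 = diagm d1" and n1: "\<forall>i. d1 i \<noteq> 0" using norm_diag[OF N1] unfolding d1_def by blast+
    have D2: "D2 = diagm d2" and n2: "\<forall>i. d2 i \<noteq> 0" using norm_diag[OF N2] unfolding d2_def by blast+
    define e where "e = (\<lambda>i. d2 i / d1 i)"
    have "\<forall>i j. (i,j) \<in> set ps \<longrightarrow> e i = e j"
    proof (intro allI impI)
      fix a b assume ab: "(a,b) \<in> set ps"
      have q1: "?B (mexp (a,b)) $ a $ b * d1 b / d1 a = 1" using norm_eq[OF N1 lps ab] d1_def by simp
      have q2: "?B (mexp (a,b)) $ a $ b * d2 b / d2 a = 1" using norm_eq[OF N2 lps ab] d2_def by simp
      have x: "?B (mexp (a,b)) $ a $ b \<noteq> 0" using q1 by auto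
      have "d1 b / d1 a = d2 b / d2 a" using q1 q2 x
        by (metis (no_types, lifting) mult_left_cancel times_divide_eq_right)
      then show "e a = e b" using n1 n2 unfolding e_def by (simp add: field_simps)
    qed
    then have ec: "\<forall>i j. e i = e j" by (rule mp[OF spec[OF con, of e]])
    define c where "c = e undefined"
    have d2c: "d2 i = c * d1 i" for i using ec n1 unfolding c_def e_def
      by (metis nonzero_eq_divide_eq)
    have cnz: "c \<noteq> 0" using d2c n2 by (metis mult_zero_left)
    show "gauge D1 (?B m) = gauge D2 (?B m)"
      unfolding vec_eq_iff D1 D2 using n1 n2 cnz
      by (simp add: gauge_diag d2c)
  next
    fix D g :: "complex^'n^'n"
    assume N: "normalizing k R A Ahat p mexp D" and ginv: "invertible g"
    have N': "normalizing k R A Ahat (\<lambda>l. ps ! l) mexp D" using N p_def by simp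
    define d where "d = (\<lambda>i. D$i$i)"
    have D: "D = diagm d" and dnz: "\<forall>i. d i \<noteq> 0" using norm_diag[OF N] unfolding d_def by blast+
    show "(\<forall>m \<le> k + 1. gauge g (gauge D (?B m)) = gauge D (?B m)) \<longleftrightarrow> (\<exists>c. c \<noteq> 0 \<and> g = mat c)"
    proof
      assume H: "\<forall>m \<le> k + 1. gauge g (gauge D (?B m)) = gauge D (?B m)"
      have comm: "gauge D (?B m) ** g = g ** gauge D (?B m)" if "m \<le> k + 1" for m
        using H[rule_format, OF that] unfolding gauge_comm[OF ginv] .
      define a where "a = (\<lambda>i. - R * A 0 $ i $ i)"
      have X0: "gauge D (?B 0) = diagm a"
        unfolding vec_eq_iff D
      proof (intro allI)
        fix i j
        have "gauge (diagm d) (?B 0) $ i $ j = ?B 0 $ i $ j * d j / d i" by (rule gauge_diag[OF dnz])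
        also have "\<dots> = diagm a $ i $ j"
          using dnz off0[of i j] by (cases "i = j") (simp_all add: a_def diagm_def B0)
        finally show "gauge (diagm d) (?B 0) $ i $ j = diagm a $ i $ j" .
      qed
      have "diagm a ** g = g ** diagm a" using comm[of 0] X0 by simp
      then have "\<forall>i j. (diagm a ** g) $ i $ j = (g ** diagm a) $ i $ j" by simp
      then have gaij: "a i * g $ i $ j = g $ i $ j * a j" for i j by (simp add: mul_diag_left mul_diag_right)
      have gdiag: "isdiag g" unfolding isdiag_def
      proof (intro allI impI)
        fix i j :: 'n assume ij: "i \<noteq> j"
        have "A 0 $ i $ i \<noteq> A 0 $ j $ j" using assms(4) ij by (meson injD)
        then have "a i \<noteq> a j" using assms(2) by (simp add: a_def)
        then show "g $ i $ j = 0" using gaij[of i j]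
          by (metis mult.commute mult_right_cancel)
      qed
      define gd where "gd = (\<lambda>i. g$i$i)"
      have G: "g = diagm gd" using isdiag_eq[OF gdiag] unfolding gd_def .
      have "\<forall>i j. (i,j) \<in> set ps \<longrightarrow> gd i = gd j"
      proof (intro allI impI)
        fix i j assume ij: "(i,j) \<in> set ps"
        have ed: "ed ?B ?N i j" using eds ij by blast
        have mle: "mexp (i,j) \<le> k + 1" using mx_prop[OF ed] mexp_def by simp
        have one: "gauge D (?B (mexp (i,j))) $ i $ j = 1"
        proof -
          have "gauge D (?B (mexp (i,j))) $ i $ j = ?B (mexp (i,j)) $ i $ j * d j / d i"
            unfolding D by (rule gauge_diag[OF dnz])
          also have "\<dots> = 1" using norm_eq[OF N' lps ij] unfolding d_def .
          finally show ?thesis .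
        qed
        have "(gauge D (?B (mexp (i,j))) ** g) $ i $ j = (g ** gauge D (?B (mexp (i,j)))) $ i $ j"
          using comm[OF mle] by simp
        then show "gd i = gd j" unfolding G using one by (simp add: mul_diag_left mul_diag_right)
      qed
      then have gc: "\<forall>i j. gd i = gd j" by (rule mp[OF spec[OF con, of gd]])
      define c where "c = gd undefined"
      have "g = mat c" unfolding G mat_diag c_def using gc by metis
      moreover have "c \<noteq> 0"
      proof
        assume "c = 0"
        then have "g = diagm (\<lambda>i::'n. 0::complex)" using \<open>g = mat c\<close> by (simp add: mat_diag)
        then have "invertible (diagm (\<lambda>i::'n. 0::complex))" using ginv by simp
        then show False using diag_inv_nz by blast
      qed
      ultimately show "\<exists>c. c \<noteq> 0 \<and> g = mat c" by blast
    next
      assume "\<exists>c. c \<noteq> 0 \<and> g = mat c"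
      then obtain c where "g = mat c" by blast
      then show "\<forall>m \<le> k + 1. gauge g (gauge D (?B m)) = gauge D (?B m)"
      proof (intro allI impI)
        fix m assume gm: "g = mat c"
        show "gauge g (gauge D (?B m)) = gauge D (?B m)"
          unfolding gauge_comm[OF ginv] unfolding gm by (rule mul_general_diag_comm)
      qed
    qed
  qed
qed

end
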